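(* The formal power series $G(z)=\sum_{n\ge3}G_n(t)\frac{z^{n-1}}{(n-1)!}\in\mathbb Z[t][[z]]$ is the unique formal power series solution of \[ \frac{dG}{dz}=\frac{z+G}{1-tG} \] satisfying $G(0)=0$.
   Context: $P_n(t)$ ($n\ge3$) is defined by $P_3=1$ and $P_n(t)=P_{n-1}(t)(1+t)+t\sum_{i=3}^{n-2}\binom{n-2}{i-1}P_i(t)P_{n+1-i}(t)$ for $n>3$; it is symmetric with center $(n-3)/2$. For $f$ symmetric with center $d/2$, written uniquely as $f(t)=\sum_{i=0}^{\lfloor d/2\rfloor}\gamma_it^i(1+t)^{d-2i}$, $\gamma(f):=\sum_i\gamma_it^i$. $G_n:=\gamma(P_n)$. *)

theory Defs
  imports "HOL-Computational_Algebra.Computational_Algebra"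
begin

text \<open>The polynomials P_n(t) (meaningful for n >= 3; the values for n < 3 are
  an irrelevant convention, set to 0).\<close>
function P :: "nat \<Rightarrow> int poly" where
  "P n = (if n < 3 then 0 else if n = 3 then 1 else
      P (n - 1) * [:1, 1:] +
      [:0, 1:] * (\<Sum>i\<in>{3..n-2}. of_nat ((n - 2) choose (i - 1)) * P i * P (n + 1 - i)))"
  by auto
termination
  by (relation "measure id") auto

definition gamma :: "nat \<Rightarrow> int poly \<Rightarrow> int poly" where
  "gamma d f = (THE g. degree g \<le> d div 2 \<and>
      f = (\<Sum>i\<le>d div 2. smult (coeff g i) (monom 1 i * [:1, 1:] ^ (d - 2 * i))))"

definition Gpoly :: "nat \<Rightarrow> int poly" where
  "Gpoly n = gamma (n - 3) (P n)"

text \<open>G(z) = sum_{n>=3} G_n(t) z^(n-1)/(n-1)!, i.e. coefficient of z^m is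
  G_{m+1}(t)/m! for m >= 2, and 0 for m < 2.\<close>
definition Gfps :: "rat poly fps" where
  "Gfps = Abs_fps (\<lambda>m. if m \<ge> 2 then smult (1 / fact m) (map_poly of_int (Gpoly (m + 1))) else 0)"

end

theory Submission
  imports Defs
begin

abbreviation ev :: "int poly \<Rightarrow> real \<Rightarrow> real" where
  "ev p x \<equiv> poly (map_poly of_int p) x"

lemma mp_add: "map_poly (of_int::int\<Rightarrow>real) (p + q) = map_poly of_int p + map_poly of_int q"
  by (simp add: poly_eq_iff coeff_map_poly)

lemma mp_mult: "map_poly (of_int::int\<Rightarrow>real) (p * q) = map_poly of_int p * map_poly of_int q"
  by (simp add: poly_eq_iff coeff_map_poly coeff_mult)

lemma ev_add[simp]: "ev (p + q) x = ev p x + ev q x" by (simp add: mp_add)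
lemma ev_mult[simp]: "ev (p * q) x = ev p x * ev q x" by (simp add: mp_mult)
lemma ev_sum[simp]: "ev (sum f A) x = (\<Sum>a\<in>A. ev (f a) x)"
  by (induction A rule: infinite_finite_induct) auto
lemma ev_pow[simp]: "ev (p ^ n) x = ev p x ^ n"
  by (induction n) auto
lemma ev_pCons[simp]: "ev (pCons a p) x = of_int a + x * ev p x"
  by (simp add: map_poly_pCons)
lemma ev_of_nat[simp]: "ev (of_nat n) x = of_nat n"
  by (simp add: of_nat_poly)
lemma ev_smult[simp]: "ev (smult c p) x = of_int c * ev p x"
  by (simp add: map_poly_smult)
lemma ev_monom[simp]: "ev (monom c n) x = of_int c * x ^ n"
  by (simp add: map_poly_monom poly_monom)

lemma mp_inj: "map_poly (of_int::int\<Rightarrow>real) p = map_poly of_int q \<Longrightarrow> p = q"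
  by (simp add: poly_eq_iff coeff_map_poly)

lemma ev_agree:
  assumes "infinite S" "\<And>x. x \<in> S \<Longrightarrow> ev p x = ev q x"
  shows "p = q"
proof -
  define r where "r = map_poly (of_int::int\<Rightarrow>real) p - map_poly of_int q"
  have "S \<subseteq> {x. poly r x = 0}" using assms(2) by (auto simp: r_def)
  hence "r = 0" using poly_roots_finite assms(1) finite_subset by blast
  thus ?thesis by (intro mp_inj) (simp add: r_def)
qed

lemma test: "ev [:0,1:] x = x" "ev [:1,1:] x = 1 + x" "ev 1 x = 1" by auto

function gam :: "nat \<Rightarrow> int poly" where
  "gam n = (if n < 3 then 0 else if n = 3 then 1 else
      gam (n - 1) +
      [:0, 1:] * (\<Sum>i\<in>{3..n-2}. of_nat ((n - 2) choose (i - 1)) * gam i * gam (n + 1 - i)))"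
  by auto
termination
  by (relation "measure id") auto

declare gam.simps[simp del] P.simps[simp del]


lemma gam_rec: assumes "n \<ge> 4" shows "gam n = gam (n - 1) +
      [:0, 1:] * (\<Sum>i\<in>{3..n-2}. of_nat ((n - 2) choose (i - 1)) * gam i * gam (n + 1 - i))"
proof -
  have a: "(n<3) = False" "(n=3) = False" using assms by auto
  show ?thesis by (rule trans[OF gam.simps]) (simp only: a if_False)
qed

lemma P_rec: assumes "n \<ge> 4" shows "P n = P (n - 1) * [:1, 1:] +
      [:0, 1:] * (\<Sum>i\<in>{3..n-2}. of_nat ((n - 2) choose (i - 1)) * P i * P (n + 1 - i))"
proof -
  have a: "(n<3) = False" "(n=3) = False" using assms by auto
  show ?thesis by (rule trans[OF P.simps]) (simp only: a if_False)
qed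

lemma gam_small: "n < 3 \<Longrightarrow> gam n = 0" "gam 3 = 1" "P 3 = 1"
  by (subst gam.simps P.simps; simp)+

lemma gam_deg: "degree (gam n) \<le> (n - 3) div 2"
proof (induction n rule: less_induct)
  case (less n)
  show ?case
  proof (cases "n \<le> 3")
    case True thus ?thesis by (cases "n < 3") (auto simp: gam_small)
  next
    case False
    have d1: "degree (gam (n-1)) \<le> (n - 3) div 2"
      using less[of "n-1"] False by auto
    have d2: "degree ([:0, 1:] * (\<Sum>i\<in>{3..n-2}. of_nat ((n - 2) choose (i - 1)) * gam i * gam (n + 1 - i)))
       \<le> (n - 3) div 2"
    proof (cases "n = 4")
      case True thus ?thesis by simp
    next
      case n4: False
      have "degree (\<Sum>i\<in>{3..n-2}. of_nat ((n - 2) choose (i - 1)) * gam i * gam (n + 1 - i)) \<le> (n-5) div 2"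
      proof (rule degree_sum_le)
        fix i assume i: "i \<in> {3..n-2}"
        have a: "degree (gam i) \<le> (i-3) div 2" using less[of i] i False by auto
        have b: "degree (gam (n+1-i)) \<le> (n+1-i-3) div 2" using less[of "n+1-i"] i False by auto
        have "degree (of_nat ((n - 2) choose (i - 1)) * gam i * gam (n + 1 - i) :: int poly)
           \<le> degree (of_nat ((n - 2) choose (i - 1)) :: int poly) + degree (gam i) + degree (gam (n + 1 - i))"
          by (rule order.trans[OF degree_mult_le add_right_mono[OF degree_mult_le]])
        also have "\<dots> \<le> 0 + (i-3) div 2 + (n+1-i-3) div 2" using a b by (simp add: degree_of_nat)
        also have "\<dots> \<le> (n-5) div 2"
        proof -
          have e: "(i-3) + (n+1-i-3) = n-5" using i by auto
          have "2 * ((i-3) div 2 + (n+1-i-3) div 2) \<le> (i-3) + (n+1-i-3)"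
          proof -
            define a where "a = i - 3"
            define b where "b = n+1-i-3"
            have "a div 2 * 2 \<le> a" "b div 2 * 2 \<le> b" by (rule div_times_less_eq_dividend)+
            hence "2 * (a div 2 + b div 2) \<le> a + b"
              unfolding distrib_left mult.commute[of 2] by (rule add_mono)
            thus ?thesis by (simp only: a_def b_def)
          qed
          hence "2 * ((i-3) div 2 + (n+1-i-3) div 2) div 2 \<le> ((i-3) + (n+1-i-3)) div 2"
            by (rule div_le_mono)
          thus ?thesis unfolding e by simp
        qed
        finally show "degree (of_nat ((n - 2) choose (i - 1)) * gam i * gam (n + 1 - i) :: int poly) \<le> (n-5) div 2" .
      qed auto
      note S = this
      have "degree ([:0, 1:] * (\<Sum>i\<in>{3..n-2}. of_nat ((n - 2) choose (i - 1)) * gam i * gam (n + 1 - i)))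
         \<le> 1 + (n-5) div 2"
        by (rule order.trans[OF degree_mult_le add_mono[OF _ S]]) simp
      also have "\<dots> \<le> (n-3) div 2"
      proof -
        have "n-3 = (n-5) + 1*2" using False n4 by auto
        hence "(n-3) div 2 = 1 + (n-5) div 2" by (simp only: div_mult_self1[of 2 "n-5" 1] zero_neq_numeral[symmetric] not_False_eq_True)
        thus ?thesis by simp
      qed
      finally show ?thesis .
    qed
    have "gam n = gam (n - 1) +
      [:0, 1:] * (\<Sum>i\<in>{3..n-2}. of_nat ((n - 2) choose (i - 1)) * gam i * gam (n + 1 - i))"
      using False by (intro gam_rec) auto
    thus ?thesis using degree_add_le[OF d1 d2] by simp
  qed
qed


definition Hom :: "nat \<Rightarrow> int poly \<Rightarrow> int poly" where
  "Hom d g = (\<Sum>i\<le>d div 2. smult (coeff g i) (monom 1 i * [:1, 1:] ^ (d - 2 * i)))"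

lemma H_ev:
  assumes "degree g \<le> d div 2" "x \<noteq> -1"
  shows "ev (Hom d g) x = (1+x)^d * ev g (x/(1+x)^2)"
proof -
  have g: "g = (\<Sum>i\<le>d div 2. monom (coeff g i) i)"
    using poly_as_sum_of_monoms'[OF assms(1)] by simp
  have nz: "1 + x \<noteq> 0" using assms(2) by auto
  have "(1+x)^d * ev g (x/(1+x)^2) = (1+x)^d * (\<Sum>i\<le>d div 2. of_int (coeff g i) * (x/(1+x)^2)^i)"
    by (subst g) simp
  also have "\<dots> = (\<Sum>i\<le>d div 2. of_int (coeff g i) * x^i * (1+x)^(d-2*i))"
    unfolding sum_distrib_left
  proof (rule sum.cong)
    fix i assume "i \<in> {..d div 2}"
    hence "d = (d - 2*i) + 2*i" by auto
    hence "(1+x)^d = (1+x)^(d-2*i) * ((1+x)^2)^i" by (metis power_add power_mult)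
    thus "(1 + x) ^ d * (real_of_int (coeff g i) * (x / (1 + x)\<^sup>2) ^ i) =
         real_of_int (coeff g i) * x ^ i * (1 + x) ^ (d - 2 * i)"
      using nz by (simp add: power_divide field_simps)
  qed simp
  finally show ?thesis by (simp add: Hom_def mult.assoc)
qed

lemma P_ev:
  assumes x: "x \<noteq> -1"
  shows "n \<ge> 3 \<Longrightarrow> ev (P n) x = (1+x)^(n-3) * ev (gam n) (x/(1+x)^2)"
proof (induction n rule: less_induct)
  case (less n)
  define s where "s = 1 + x"
  define u where "u = x/(1+x)^2"
  have s0: "s \<noteq> 0" using x by (auto simp: s_def)
  show ?case
  proof (cases "n = 3")
    case True thus ?thesis by (simp add: gam_small)
  next
    case False
    hence n4: "n \<ge> 4" using less.prems by auto
    have IH: "ev (P i) x * ev (P (n + 1 - i)) x = s^(i-3) * s^(n+1-i-3) * (ev (gam i) u * ev (gam (n+1-i)) u)"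
      if i: "i \<in> {3..n-2}" for i
    proof -
      have "i < n" "3 \<le> i" "n+1-i < n" "3 \<le> n+1-i" using i n4 by auto
      thus ?thesis using less.IH[of i] less.IH[of "n+1-i"] by (simp add: s_def u_def)
    qed
    have key: "x * (s^(i-3) * s^(n+1-i-3)) = s^(n-3) * u" if i: "i \<in> {3..n-2}" for i
    proof -
      have e1: "(i-3) + (n+1-i-3) = n-5" "n-3 = (n-5) + 2" using i n4 by auto
      have "s^(i-3) * s^(n+1-i-3) = s^(n-5)" by (simp only: power_add[symmetric] e1)
      moreover have "s^(n-3) = s^(n-5) * s^2" by (simp only: power_add[symmetric] e1)
      ultimately show ?thesis using s0 by (simp add: u_def s_def[symmetric] field_simps)
    qed
    have "ev (P n) x = ev (P (n-1)) x * s +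
        x * (\<Sum>i\<in>{3..n-2}. of_nat ((n - 2) choose (i - 1)) * (ev (P i) x * ev (P (n + 1 - i)) x))"
      using n4 by (simp add: P_rec s_def mult.assoc ring_distribs)
    also have "\<dots> = s^(n-4) * ev (gam (n-1)) u * s +
        (\<Sum>i\<in>{3..n-2}. x * (s^(i-3) * s^(n+1-i-3)) * (of_nat ((n - 2) choose (i - 1)) * ev (gam i) u * ev (gam (n+1-i)) u))"
    proof -
      have A: "ev (P (n-1)) x = s^(n-4) * ev (gam (n-1)) u"
        using less.IH[of "n-1"] n4 by (simp add: s_def u_def)
      have B: "(\<Sum>i\<in>{3..n-2}. of_nat ((n - 2) choose (i - 1)) * (ev (P i) x * ev (P (n + 1 - i)) x))
         = (\<Sum>i\<in>{3..n-2}. of_nat ((n - 2) choose (i - 1)) * (s^(i-3) * s^(n+1-i-3) * (ev (gam i) u * ev (gam (n+1-i)) u)))"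
        by (rule sum.cong[OF refl]) (simp only: IH)
      show ?thesis unfolding A B sum_distrib_left
        by (intro arg_cong2[where f="(+)"] refl sum.cong) (simp_all add: ac_simps)
    qed
    also have "\<dots> = s^(n-4) * ev (gam (n-1)) u * s +
        (\<Sum>i\<in>{3..n-2}. s^(n-3) * u * (of_nat ((n - 2) choose (i - 1)) * ev (gam i) u * ev (gam (n+1-i)) u))"
      by (intro arg_cong2[where f="(+)"] refl sum.cong) (simp_all only: key)
    also have "\<dots> = s^(n-3) * ev (gam n) u"
    proof -
      have e: "n - 3 = Suc (n-4)" using n4 by auto
      have "s^(n-4) * s = s^(n-3)" by (simp only: e power_Suc2)
      thus ?thesis using n4
        by (simp add: gam_rec sum_distrib_left algebra_simps)
    qed
    finally show ?thesis by (simp add: s_def u_def)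
  qed
qed


lemma P_eq_H: assumes "n \<ge> 3" shows "P n = Hom (n-3) (gam n)"
proof (rule ev_agree)
  show "infinite (UNIV - {-1::real})" by (simp add: infinite_UNIV_char_0)
  fix x :: real assume "x \<in> UNIV - {-1}"
  hence x: "x \<noteq> -1" by auto
  show "ev (P n) x = ev (Hom (n - 3) (gam n)) x"
    using P_ev[OF x assms] H_ev[OF gam_deg x] by simp
qed

lemma inj_u: "inj_on (\<lambda>x::real. x/(1+x)^2) {0<..<1}"
proof (rule inj_onI)
  fix x y :: real assume x: "x \<in> {0<..<1}" and y: "y \<in> {0<..<1}" and e: "x/(1+x)^2 = y/(1+y)^2"
  have "x * (1+y)^2 = y * (1+x)^2" using e x y by (simp add: field_simps)
  hence "(x - y) * (1 - x*y) = 0" by (simp add: algebra_simps power2_eq_square)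
  moreover have "x*y < 1"
  proof -
    have "x*y < x*1" using x y by (intro mult_strict_left_mono) auto
    hence "x*y < x" by simp
    moreover have "x < 1" using x by simp
    ultimately show ?thesis by linarith
  qed
  ultimately show "x = y" by auto
qed

lemma H_inj:
  assumes "degree g \<le> d div 2" "degree h \<le> d div 2" "Hom d g = Hom d h"
  shows "g = h"
proof (rule ev_agree)
  show "infinite ((\<lambda>x::real. x/(1+x)^2) ` {0<..<1})"
    using inj_u finite_imageD by (metis infinite_Ioo zero_less_one)
  fix y assume "y \<in> (\<lambda>x::real. x/(1+x)^2) ` {0<..<1}"
  then obtain x where x: "x \<in> {0<..<1}" and y: "y = x/(1+x)^2" by auto
  have x1: "x \<noteq> -1" using x by auto
  have "(1+x)^d * ev g y = ev (Hom d g) x" using H_ev[OF assms(1) x1] y by simp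
  also have "\<dots> = ev (Hom d h) x" using assms(3) by simp
  also have "\<dots> = (1+x)^d * ev h y" using H_ev[OF assms(2) x1] y by simp
  finally have "(1+x)^d * ev g y = (1+x)^d * ev h y" .
  moreover have "(1+x)^d \<noteq> 0" using x by auto
  ultimately show "ev g y = ev h y" using x1 by simp
qed

lemma Gpoly_gam: assumes "n \<ge> 3" shows "Gpoly n = gam n"
  unfolding Gpoly_def gamma_def Hom_def[symmetric]
proof (rule the_equality)
  show "degree (gam n) \<le> (n - 3) div 2 \<and> P n = Hom (n-3) (gam n)"
    using gam_deg P_eq_H[OF assms] by blast
  fix g assume "degree g \<le> (n - 3) div 2 \<and> P n = Hom (n-3) g"
  thus "g = gam n" using H_inj[of g "n-3" "gam n"] gam_deg P_eq_H[OF assms] by metis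
qed


lemma mq_add: "map_poly (of_int::int\<Rightarrow>rat) (p + q) = map_poly of_int p + map_poly of_int q"
  by (simp add: poly_eq_iff coeff_map_poly)
lemma mq_mult: "map_poly (of_int::int\<Rightarrow>rat) (p * q) = map_poly of_int p * map_poly of_int q"
  by (simp add: poly_eq_iff coeff_map_poly coeff_mult)
lemma mq_sum: "map_poly (of_int::int\<Rightarrow>rat) (sum f A) = (\<Sum>a\<in>A. map_poly of_int (f a))"
  by (induction A rule: infinite_finite_induct) (auto simp: mq_add)
lemma mq_pCons: "map_poly (of_int::int\<Rightarrow>rat) (pCons a p) = pCons (of_int a) (map_poly of_int p)"
  by (simp add: map_poly_pCons)
lemma mq_of_nat: "map_poly (of_int::int\<Rightarrow>rat) (of_nat n) = of_nat n"
  by (simp add: of_nat_poly mq_pCons)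
lemma smult_sum_right: "smult c (sum f A) = (\<Sum>a\<in>A. smult c (f a))"
  by (induction A rule: infinite_finite_induct) (auto simp: smult_add_right)
lemma of_nat_mult_poly: "(of_nat n :: rat poly) * p = smult (of_nat n) p"
  by (simp add: of_nat_poly)

definition q :: "nat \<Rightarrow> rat poly" where "q k = map_poly of_int (gam k)"

lemma q_small: "k < 3 \<Longrightarrow> q k = 0" "q 3 = 1"
  by (simp_all add: q_def gam_small)

lemma q_rec: assumes "m \<ge> 2"
  shows "q (m+2) = q (m+1) + [:0,1:] * (\<Sum>i\<in>{3..m}. smult (of_nat (m choose (i-1))) (q i * q (m+3-i)))"
proof -
  have g: "gam (m+2) = gam (m+2-1) + [:0,1:] * (\<Sum>i\<in>{3..m+2-2}. of_nat ((m+2-2) choose (i-1)) * gam i * gam (m+2+1-i))"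
    by (rule gam_rec) (use assms in auto)
  have e: "m+2-1 = m+1" "m+2-2 = m" "\<And>i. m+2+1-i = m+3-i" by auto
  have "gam (m+2) = gam (m + 1) +
      [:0, 1:] * (\<Sum>i\<in>{3..m}. of_nat (m choose (i - 1)) * gam i * gam (m + 3 - i))"
    using g by (simp only: e)
  hence "q (m+2) = q (m+1) + [:0,1:] * (\<Sum>i\<in>{3..m}. of_nat (m choose (i - 1)) * q i * q (m + 3 - i))"
    by (simp add: q_def mq_add mq_mult mq_sum mq_pCons mq_of_nat)
  thus ?thesis by (simp add: of_nat_mult_poly mult.assoc)
qed

lemma Gnth: "Gfps $ k = smult (1 / fact k) (q (k+1))"
  by (auto simp: Gfps_def q_def Gpoly_gam q_small[unfolded q_def])

lemma Gdnth: "fps_deriv Gfps $ k = smult (1 / fact k) (q (k+2))"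
proof -
  have "fps_deriv Gfps $ k = of_nat (k+1) * smult (1 / fact (k+1)) (q (k+2))"
    by (simp add: Gnth)
  also have "\<dots> = smult (of_nat (k+1) * (1 / fact (k+1))) (q (k+2))"
    by (simp only: of_nat_mult_poly smult_smult)
  also have "of_nat (k+1) * (1 / fact (k+1)) = (1 / fact k :: rat)"
  proof -
    have eq: "fact (k+1) = of_nat (k+1) * (fact k :: rat)" by (simp only: Suc_eq_plus1[symmetric] fact_Suc)
    have nz: "(of_nat (k+1) :: rat) \<noteq> 0" "(fact k :: rat) \<noteq> 0" by auto
    show ?thesis unfolding eq using nz by (simp del: of_nat_Suc fact_Suc)
  qed
  finally show ?thesis .
qed

lemma reindex: assumes "m \<ge> 2"
  shows "(\<Sum>k=0..m. smult (of_nat (m choose k)) (q (k+2) * q (m-k+1)))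
       = (\<Sum>i\<in>{3..m}. smult (of_nat (m choose (i-1))) (q i * q (m+3-i)))"
proof -
  have "(\<Sum>k=0..m. smult (of_nat (m choose k)) (q (k+2) * q (m-k+1)))
      = (\<Sum>k\<in>{1..m-2}. smult (of_nat (m choose k)) (q (k+2) * q (m-k+1)))"
  proof (rule sum.mono_neutral_right)
    show "\<forall>k\<in>{0..m} - {1..m-2}. smult (of_nat (m choose k)) (q (k+2) * q (m-k+1)) = 0"
    proof
      fix k assume k: "k \<in> {0..m} - {1..m-2}"
      hence "k = 0 \<or> m - k + 1 < 3" by auto
      thus "smult (of_nat (m choose k)) (q (k+2) * q (m-k+1)) = 0" by (auto simp: q_small)
    qed
  qed auto
  also have "\<dots> = (\<Sum>i\<in>{3..m}. smult (of_nat (m choose (i-1))) (q i * q (m+3-i)))"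
  proof (rule sum.reindex_bij_witness[of _ "\<lambda>i. m + 1 - i" "\<lambda>k. m + 1 - k"])
    fix i assume i: "i \<in> {3..m}"
    show "m + 1 - (m + 1 - i) = i" using i by auto
    show "m + 1 - i \<in> {1..m-2}" using i by auto
  next
    fix k assume k: "k \<in> {1..m-2}"
    have e1: "m choose (m + 1 - k - 1) = m choose k"
    proof -
      have "m choose k = m choose (m-k)" by (rule binomial_symmetric) (use k in auto)
      also have "m-k = m+1-k-1" using k by auto
      finally show ?thesis by simp
    qed
    have e2: "m + 3 - (m + 1 - k) = k + 2" "m - k + 1 = m + 1 - k" using k by auto
    show "smult (of_nat (m choose (m + 1 - k - 1))) (q (m + 1 - k) * q (m + 3 - (m + 1 - k))) =
          smult (of_nat (m choose k)) (q (k+2) * q (m - k + 1))"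
      by (simp only: e1 e2 mult.commute)
    show "m + 1 - k \<in> {3..m}" using k by auto
    show "m + 1 - (m + 1 - k) = k" using k by auto
  qed
  finally show ?thesis .
qed

lemma conv: "(fps_deriv Gfps * Gfps) $ m =
    smult (1 / fact m) (\<Sum>k=0..m. smult (of_nat (m choose k)) (q (k+2) * q (m-k+1)))"
proof -
  have "(fps_deriv Gfps * Gfps) $ m = (\<Sum>k=0..m. smult (1 / fact k) (q (k+2)) * smult (1 / fact (m-k)) (q (m-k+1)))"
    by (simp only: fps_mult_nth Gnth Gdnth)
  also have "\<dots> = (\<Sum>k=0..m. smult (1 / fact m * of_nat (m choose k)) (q (k+2) * q (m-k+1)))"
  proof (rule sum.cong[OF refl])
    fix k assume k: "k \<in> {0..m}"
    have "1 / fact m * of_nat (m choose k) = (1 / fact k * (1 / fact (m-k)) :: rat)"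
      using k by (simp add: binomial_fact)
    thus "smult (1 / fact k) (q (k+2)) * smult (1 / fact (m-k)) (q (m-k+1)) =
          smult (1 / fact m * of_nat (m choose k)) (q (k+2) * q (m-k+1))"
      by (simp add: mult.commute)
  qed
  also have "\<dots> = smult (1 / fact m) (\<Sum>k=0..m. smult (of_nat (m choose k)) (q (k+2) * q (m-k+1)))"
    by (simp add: smult_sum_right)
  finally show ?thesis .
qed

lemma G_ode: "fps_deriv Gfps * (1 - fps_const [:0, 1:] * Gfps) = fps_X + Gfps"
proof (rule fps_ext)
  fix m
  have L: "(fps_deriv Gfps * (1 - fps_const [:0, 1:] * Gfps)) $ m
      = fps_deriv Gfps $ m - [:0,1:] * (fps_deriv Gfps * Gfps) $ m"
    by (simp add: ring_distribs mult.left_commute[of "fps_deriv Gfps"])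
  show "(fps_deriv Gfps * (1 - fps_const [:0, 1:] * Gfps)) $ m = (fps_X + Gfps) $ m"
  proof (cases "m \<ge> 2")
    case True
    define S where "S = (\<Sum>i\<in>{3..m}. smult (of_nat (m choose (i-1))) (q i * q (m+3-i)))"
    have "(fps_deriv Gfps * (1 - fps_const [:0, 1:] * Gfps)) $ m
        = smult (1 / fact m) (q (m+2)) - [:0,1:] * smult (1 / fact m) S"
      unfolding L Gdnth conv reindex[OF True] S_def ..
    also have "\<dots> = smult (1 / fact m) (q (m+1))"
      using q_rec[OF True] by (simp add: S_def smult_add_right)
    finally show ?thesis using True by (simp add: Gnth)
  next
    case False
    hence "m = 0 \<or> m = 1" by auto
    thus ?thesis
      by (auto simp: L Gnth Gdnth fps_mult_nth q_small q_small(2)[unfolded numeral_3_eq_3] simp del: fps_deriv_nth)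
  qed
qed

lemma ode_unique:
  fixes A B :: "rat poly fps" and c :: "rat poly"
  assumes A: "fps_deriv A * (1 - fps_const c * A) = fps_X + A" "A $ 0 = 0"
      and B: "fps_deriv B * (1 - fps_const c * B) = fps_X + B" "B $ 0 = 0"
  shows "A = B"
proof -
  have coef: "of_nat (n+1) * F $ (n+1) = fps_X $ n + F $ n +
       c * (\<Sum>k\<in>{0..<n}. of_nat (k+1) * F $ (k+1) * F $ (n-k))"
    if F: "fps_deriv F * (1 - fps_const c * F) = fps_X + F" "F $ 0 = 0" for F :: "rat poly fps" and n
  proof -
    have "(fps_deriv F * (1 - fps_const c * F)) $ n = (fps_X + F) $ n" using F by simp
    hence "fps_deriv F $ n - c * (fps_deriv F * F) $ n = fps_X $ n + F $ n"
      by (simp add: ring_distribs mult.left_commute[of "fps_deriv F"])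
    moreover have "(fps_deriv F * F) $ n = (\<Sum>k\<in>{0..<n}. of_nat (k+1) * F $ (k+1) * F $ (n-k))"
      using F(2) by (simp add: fps_mult_nth atLeastLessThanSuc_atLeastAtMost[symmetric] del: of_nat_Suc)
    ultimately show ?thesis by (simp add: algebra_simps)
  qed
  have "\<forall>j\<le>n. A $ j = B $ j" for n
  proof (induction n)
    case 0 thus ?case using A B by simp
  next
    case (Suc n)
    have "(\<Sum>k\<in>{0..<n}. of_nat (k+1) * A $ (k+1) * A $ (n-k)) = (\<Sum>k\<in>{0..<n}. of_nat (k+1) * B $ (k+1) * B $ (n-k))"
      using Suc.IH by (intro sum.cong) auto
    hence "of_nat (n+1) * A $ (n+1) = of_nat (n+1) * B $ (n+1)"
      using coef[OF A, of n] coef[OF B, of n] Suc.IH by simp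
    hence "A $ (n+1) = B $ (n+1)" by (simp del: of_nat_Suc)
    thus ?case using Suc.IH le_Suc_eq by auto
  qed
  thus ?thesis by (intro fps_ext) auto
qed

theorem mainTheorem6:
  shows "fps_deriv Gfps * (1 - fps_const [:0, 1:] * Gfps) = fps_X + Gfps \<and> Gfps $ 0 = 0 \<and>
    (\<forall>H :: rat poly fps. fps_deriv H * (1 - fps_const [:0, 1:] * H) = fps_X + H \<and> H $ 0 = 0
        \<longrightarrow> H = Gfps)"
proof (intro conjI allI impI)
  show G: "fps_deriv Gfps * (1 - fps_const [:0, 1:] * Gfps) = fps_X + Gfps" by (rule G_ode)
  show G0: "Gfps $ 0 = 0" by (simp add: Gnth q_small)
  fix H :: "rat poly fps"
  assume "fps_deriv H * (1 - fps_const [:0, 1:] * H) = fps_X + H \<and> H $ 0 = 0"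
  thus "H = Gfps" using ode_unique[OF _ _ G G0] by blast
qed

end
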